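(* Let $\lambda_1,\lambda_2,\lambda_3>0$ satisfy $3\lambda_i^2+\lambda_i(\lambda_j+\lambda_k)-\lambda_j\lambda_k>0$ for each $i$ (with $\{i,j,k\}=\{1,2,3\}$), and let $F_1=F_2=F_3=0$. Then, with $\sigma_i,w_i$ given by the 3D $B_2$ formulas, $0<\sigma_i<w_i$ for $i=1,2,3$; hence $\gamma_i=\frac12$ and $\delta_i=\sigma_i/(w_i-\sigma_i)>0$ are well defined and the ansatz $\hat I(\Omega)=\sum_{i=1}^3\frac{1}{2\pi}w_i\mathcal{F}(\Omega\cdot R_i;\gamma_i,\delta_i)$ is a non-negative function for any orthonormal $R_1,R_2,R_3$.
   Context: For $x,y>0$, $g(x,y;a,b)=\dfrac{2(x-a^2/x)(y-b^2/y)(x-a^2/x+y-b^2/y)}{3(x+y)^2}$; for $\{i,j,k\}=\{1,2,3\}$, $\sigma_i=\lambda_i-g(\lambda_i,\lambda_j;F_i,F_j)-g(\lambda_i,\lambda_k;F_i,F_k)$, $w_i=\sigma_i+2g(\lambda_j,\lambda_k;F_j,F_k)$, $\gamma_i=\frac{F_i+w_i}{2w_i}$, $\delta_i=\frac{\sigma_iw_i-F_i^2}{w_i^2-\sigma_iw_i}$. For $\gamma\in(0,1),\delta>0$, with $\xi=\gamma/\delta$, $\eta=(1-\gamma)/\delta$, $\mathcal{F}(\mu;\gamma,\delta)=\frac{1}{2\mathrm{B}(\xi,\eta)}\left(\frac{1+\mu}{2}\right)^{\xi-1}\left(\frac{1-\mu}{2}\right)^{\eta-1}$ on $[-1,1]$.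 *)

theory Defs
  imports "HOL-Analysis.Analysis"
begin

(* Indices i,j,k range over {0,1,2} (paper: {1,2,3}); for a given i the other
   two indices are j = (i+1) mod 3 and k = (i+2) mod 3. *)

definition gB2 :: "real \<Rightarrow> real \<Rightarrow> real \<Rightarrow> real \<Rightarrow> real" where
  "gB2 x y a b = 2 * (x - a^2/x) * (y - b^2/y) * (x - a^2/x + y - b^2/y) / (3 * (x + y)^2)"

definition sigmaB2 :: "(nat \<Rightarrow> real) \<Rightarrow> (nat \<Rightarrow> real) \<Rightarrow> nat \<Rightarrow> real" where
  "sigmaB2 lam F i = (let j = (i+1) mod 3; k = (i+2) mod 3 in
     lam i - gB2 (lam i) (lam j) (F i) (F j) - gB2 (lam i) (lam k) (F i) (F k))"

definition wB2 :: "(nat \<Rightarrow> real) \<Rightarrow> (nat \<Rightarrow> real) \<Rightarrow> nat \<Rightarrow> real" where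
  "wB2 lam F i = (let j = (i+1) mod 3; k = (i+2) mod 3 in
     sigmaB2 lam F i + 2 * gB2 (lam j) (lam k) (F j) (F k))"

definition gammaB2 :: "(nat \<Rightarrow> real) \<Rightarrow> (nat \<Rightarrow> real) \<Rightarrow> nat \<Rightarrow> real" where
  "gammaB2 lam F i = (F i + wB2 lam F i) / (2 * wB2 lam F i)"

definition deltaB2 :: "(nat \<Rightarrow> real) \<Rightarrow> (nat \<Rightarrow> real) \<Rightarrow> nat \<Rightarrow> real" where
  "deltaB2 lam F i = (sigmaB2 lam F i * wB2 lam F i - (F i)^2) /
                     ((wB2 lam F i)^2 - sigmaB2 lam F i * wB2 lam F i)"

definition Fdist :: "real \<Rightarrow> real \<Rightarrow> real \<Rightarrow> real" where
  "Fdist \<mu> \<gamma> \<delta> = (if -1 \<le> \<mu> \<and> \<mu> \<le> 1 then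
     (let \<xi> = \<gamma> / \<delta>; \<eta> = (1 - \<gamma>) / \<delta> in
       1 / (2 * Beta \<xi> \<eta>) * ((1 + \<mu>)/2) powr (\<xi> - 1) * ((1 - \<mu>)/2) powr (\<eta> - 1))
     else 0)"

definition ansatz :: "(nat \<Rightarrow> real) \<Rightarrow> (nat \<Rightarrow> real) \<Rightarrow> (nat \<Rightarrow> real^3) \<Rightarrow> real^3 \<Rightarrow> real" where
  "ansatz lam F R \<Omega> = (\<Sum>i<3. 1 / (2 * pi) * wB2 lam F i *
      Fdist (\<Omega> \<bullet> R i) (gammaB2 lam F i) (deltaB2 lam F i))"

end

theory Submission
  imports Defs
begin

lemma Fdist_nonneg:
  assumes "0 < g" "g < 1" "0 < d"
  shows "Fdist m g d \<ge> 0"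
proof -
  have "g/d > 0" "(1-g)/d > 0" using assms by auto
  hence "Gamma (g/d) > 0" "Gamma ((1-g)/d) > 0" "Gamma (g/d + (1-g)/d) > 0" by auto
  hence "Beta (g/d) ((1-g)/d) > 0" unfolding Beta_def by simp
  thus ?thesis unfolding Fdist_def Let_def by auto
qed

lemma g0: "x > 0 \<Longrightarrow> y > 0 \<Longrightarrow> gB2 x y 0 0 = 2*x*y/(3*(x+y))"
proof -
  assume "x > 0" "y > 0"
  hence "x+y \<noteq> 0" by simp
  have "gB2 x y 0 0 = (2*x*y) * (x+y) / ((3*(x+y)) * (x+y))"
    unfolding gB2_def by (simp add: power2_eq_square algebra_simps)
  also have "\<dots> = 2*x*y/(3*(x+y))" using \<open>x+y \<noteq> 0\<close> by simp
  finally show ?thesis .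
qed

lemma key:
  fixes a b c :: real
  assumes "a > 0" "b > 0" "c > 0" "3*a^2 + a*(b+c) - b*c > 0"
  shows "a - 2*a*b/(3*(a+b)) - 2*a*c/(3*(a+c)) > 0"
proof -
  have "a - 2*a*b/(3*(a+b)) - 2*a*c/(3*(a+c)) = a*(3*a^2 + a*(b+c) - b*c)/(3*(a+b)*(a+c))"
    using assms by (simp add: divide_simps) (simp add: algebra_simps power2_eq_square)
  also have "\<dots> > 0" using assms by (intro divide_pos_pos mult_pos_pos) auto
  finally show ?thesis .
qed

theorem mainTheorem10:
  fixes lam F :: "nat \<Rightarrow> real"
  assumes pos: "\<And>i. i < 3 \<Longrightarrow> lam i > 0"
    and cond: "\<And>i. i < 3 \<Longrightarrow>
       3 * (lam i)^2 + lam i * (lam ((i+1) mod 3) + lam ((i+2) mod 3))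
         - lam ((i+1) mod 3) * lam ((i+2) mod 3) > 0"
    and F0: "\<And>i. i < 3 \<Longrightarrow> F i = 0"
  shows "(\<forall>i<3. 0 < sigmaB2 lam F i \<and> sigmaB2 lam F i < wB2 lam F i
            \<and> gammaB2 lam F i = 1/2
            \<and> deltaB2 lam F i = sigmaB2 lam F i / (wB2 lam F i - sigmaB2 lam F i)
            \<and> deltaB2 lam F i > 0)
         \<and> (\<forall>(R :: nat \<Rightarrow> real^3) (\<Omega> :: real^3).
              (\<forall>i<3. \<forall>j<3. R i \<bullet> R j = (if i = j then 1 else 0)) \<and> norm \<Omega> = 1
              \<longrightarrow> ansatz lam F R \<Omega> \<ge> 0)"
proof -
  have A: "0 < sigmaB2 lam F i \<and> sigmaB2 lam F i < wB2 lam F i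
            \<and> gammaB2 lam F i = 1/2
            \<and> deltaB2 lam F i = sigmaB2 lam F i / (wB2 lam F i - sigmaB2 lam F i)
            \<and> deltaB2 lam F i > 0" if i: "i < 3" for i
  proof -
    define j where "j = (i+1) mod 3"
    define k where "k = (i+2) mod 3"
    have jk: "j < 3" "k < 3" unfolding j_def k_def by auto
    have p: "lam i > 0" "lam j > 0" "lam k > 0" using pos i jk by auto
    have f: "F i = 0" "F j = 0" "F k = 0" using F0 i jk by auto
    have s: "sigmaB2 lam F i = lam i - 2*lam i*lam j/(3*(lam i+lam j)) - 2*lam i*lam k/(3*(lam i+lam k))"
      unfolding sigmaB2_def Let_def j_def[symmetric] k_def[symmetric] f using p by (simp add: g0)
    have w: "wB2 lam F i = sigmaB2 lam F i + 2*(2*lam j*lam k/(3*(lam j+lam k)))"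
      unfolding wB2_def Let_def j_def[symmetric] k_def[symmetric] f using p by (simp add: g0)
    have sp: "sigmaB2 lam F i > 0" unfolding s
      using key[OF p] cond[OF i] unfolding j_def k_def by simp
    have "2*lam j*lam k/(3*(lam j+lam k)) > 0" using p by simp
    hence sw: "sigmaB2 lam F i < wB2 lam F i" unfolding w by linarith
    have g: "gammaB2 lam F i = 1/2" unfolding gammaB2_def f using sp sw by simp
    have d: "deltaB2 lam F i = sigmaB2 lam F i / (wB2 lam F i - sigmaB2 lam F i)"
      unfolding deltaB2_def f using sp sw by (simp add: field_simps power2_eq_square)
    have "deltaB2 lam F i > 0" unfolding d using sp sw by simp
    thus ?thesis using sp sw g d by simp
  qed
  have B: "ansatz lam F R \<Omega> \<ge> 0" for R \<Omega>
    unfolding ansatz_def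
  proof (rule sum_nonneg)
    fix i assume "i \<in> {..<(3::nat)}"
    hence i: "i < 3" by simp
    from A[OF i] have "wB2 lam F i > 0" "deltaB2 lam F i > 0" "gammaB2 lam F i = 1/2" by auto
    thus "0 \<le> 1 / (2 * pi) * wB2 lam F i * Fdist (\<Omega> \<bullet> R i) (gammaB2 lam F i) (deltaB2 lam F i)"
      using Fdist_nonneg[of "gammaB2 lam F i" "deltaB2 lam F i" "\<Omega> \<bullet> R i"] by simp
  qed
  show ?thesis using A B by blast
qed

end
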